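(* Let $f(z)=z+\sum_{n=2}^{\infty}a_nz^n$ belong to $\mathcal{S}^*_{\xi}$. Then $|a_3-a_2^2|\le \frac12$. The bound is sharp: equality holds for some function in $\mathcal{S}^*_{\xi}$.
   Context: $\mathbb{D}=\{z\in\mathbb{C}:|z|<1\}$. $\mathcal{A}$ is the class of analytic functions $f$ on $\mathbb{D}$ of the form $f(z)=z+\sum_{n\ge2}a_nz^n$. For analytic $f,g$ on $\mathbb{D}$, $f\prec g$ means there is an analytic $w:\mathbb{D}\to\mathbb{D}$ with $w(0)=0$ and $f=g\circ w$. Let $\xi(z)=1+\frac{\sin z}{1-z}$ for $z\in\mathbb{D}$, and $\mathcal{S}^*_{\xi}=\{f\in\mathcal{A}: \frac{zf'(z)}{f(z)}\prec \xi(z)\}$. *)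

theory Defs
  imports "HOL-Complex_Analysis.Complex_Analysis"
begin

abbreviation unit_disc :: "complex set" where
  "unit_disc \<equiv> ball 0 1"

definition classA :: "(complex \<Rightarrow> complex) set" where
  "classA = {f. f holomorphic_on unit_disc \<and> f 0 = 0 \<and> deriv f 0 = 1}"

definition coeff0 :: "(complex \<Rightarrow> complex) \<Rightarrow> nat \<Rightarrow> complex" where
  "coeff0 f n = (deriv ^^ n) f 0 / of_nat (fact n)"

definition subordinate :: "(complex \<Rightarrow> complex) \<Rightarrow> (complex \<Rightarrow> complex) \<Rightarrow> bool" where
  "subordinate f g \<longleftrightarrow> f holomorphic_on unit_disc \<and> g holomorphic_on unit_disc \<and>
     (\<exists>w. w holomorphic_on unit_disc \<and> w ` unit_disc \<subseteq> unit_disc \<and> w 0 = 0 \<and>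
          (\<forall>z\<in>unit_disc. f z = g (w z)))"

definition xi :: "complex \<Rightarrow> complex" where
  "xi z = 1 + sin z / (1 - z)"

text \<open>z f'(z)/f(z), extended by its limiting value 1 at z = 0.\<close>
definition zf_over_f :: "(complex \<Rightarrow> complex) \<Rightarrow> complex \<Rightarrow> complex" where
  "zf_over_f f z = (if z = 0 then 1 else z * deriv f z / f z)"

definition S_star_xi :: "(complex \<Rightarrow> complex) set" where
  "S_star_xi = {f \<in> classA. (\<forall>z\<in>unit_disc. z \<noteq> 0 \<longrightarrow> f z \<noteq> 0) \<and>
                           subordinate (zf_over_f f) xi}"

end

theory Submission
  imports Defs
begin


definition xi1 :: "complex \<Rightarrow> complex" where
  "xi1 z = (cos z * (1-z) + sin z) / (1-z)^2"
definition xi2 :: "complex \<Rightarrow> complex" where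
  "xi2 z = (- sin z * (1-z)^3 + 2*(1-z)*(cos z*(1-z)+sin z)) / (1-z)^4"

lemma xi_deriv: "z \<noteq> 1 \<Longrightarrow> (xi has_field_derivative xi1 z) (at z)"
  unfolding xi_def [abs_def] xi1_def
  apply (rule derivative_eq_intros refl | simp)+
  apply (simp add: field_simps power2_eq_square)
  done

lemma xi1_deriv: "z \<noteq> 1 \<Longrightarrow> (xi1 has_field_derivative xi2 z) (at z)"
  unfolding xi1_def [abs_def] xi2_def
  apply (rule derivative_eq_intros refl | simp)+
  apply (simp add: field_simps power2_eq_square eval_nat_numeral)
  done

lemma xi_holo: "xi holomorphic_on unit_disc"
  unfolding xi_def[abs_def] by (intro holomorphic_intros) auto

lemma xi1_0: "xi1 0 = 1" by (simp add: xi1_def)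
lemma xi2_0: "xi2 0 = 2" by (simp add: xi2_def)

lemma key:
  assumes fS: "f \<in> S_star_xi"
    and wh: "w holomorphic_on unit_disc" and wim: "w ` unit_disc \<subseteq> unit_disc" and w0: "w 0 = 0"
    and pw: "\<forall>z\<in>unit_disc. zf_over_f f z = xi (w z)"
  shows "coeff0 f 3 - (coeff0 f 2)\<^sup>2 = (deriv ^^ 2) w 0 / 4"
proof -
  define p where "p = zf_over_f f"
  have holf: "f holomorphic_on unit_disc" and f0: "f 0 = 0" and f1: "deriv f 0 = 1"
    and fnz: "\<forall>z\<in>unit_disc. z \<noteq> 0 \<longrightarrow> f z \<noteq> 0"
    using fS by (auto simp: S_star_xi_def classA_def)
  have p00: "p 0 = 1" by (simp add: p_def zf_over_f_def)
  have wne: "w z \<noteq> 1" if "z \<in> unit_disc" for z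
    using wim that by fastforce
  have holp: "p holomorphic_on unit_disc"
  proof -
    have "(xi \<circ> w) holomorphic_on unit_disc"
      by (rule holomorphic_on_compose_gen[OF wh xi_holo wim])
    then show ?thesis
      by (rule holomorphic_transform) (use pw p_def in auto)
  qed
  have ident: "z * deriv f z = f z * p z" if "z \<in> unit_disc" for z
    using fnz that by (auto simp: p_def zf_over_f_def f0)
  have holdf: "deriv f holomorphic_on unit_disc" using holf by (intro holomorphic_deriv) auto
  have ev: "\<forall>\<^sub>F z in nhds 0. z * deriv f z = f z * p z"
    unfolding eventually_nhds using ident by (intro exI[of _ "ball 0 1"]) auto
  have L: "(deriv ^^ n) (\<lambda>z. z * deriv f z) 0 = (\<Sum>i = 0..n. of_nat (n choose i) * (deriv ^^ i) (\<lambda>z. z) 0 * (deriv ^^ (n-i)) (deriv f) 0)" for n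
    by (rule higher_deriv_mult[OF _ holdf]) auto
  have R: "(deriv ^^ n) (\<lambda>z. f z * p z) 0 = (\<Sum>i = 0..n. of_nat (n choose i) * (deriv ^^ i) f 0 * (deriv ^^ (n-i)) p 0)" for n
    by (rule higher_deriv_mult[OF holf holp]) auto
  have LR: "(deriv ^^ n) (\<lambda>z. z * deriv f z) 0 = (deriv ^^ n) (\<lambda>z. f z * p z) 0" for n
    by (rule higher_deriv_cong_ev[OF ev refl])
  have d3: "(deriv ^^ 3) f = (deriv ^^ 2) (deriv f)" "(deriv ^^ 2) f = deriv (deriv f)"
    by (simp_all add: eval_nat_numeral funpow_Suc_right del: funpow.simps)
  have e2: "2 * deriv (deriv f) 0 = deriv (deriv f) 0 + 2 * deriv p 0"
    using LR[of 2] unfolding L R by (simp add: eval_nat_numeral f0 f1 p00)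
  have e3: "3 * (deriv ^^ 3) f 0 = (deriv ^^ 3) f 0 + 3 * deriv (deriv f) 0 * deriv p 0 + 3 * deriv (deriv p) 0"
    using LR[of 3] unfolding L R by (simp add: eval_nat_numeral f0 f1 p00 algebra_simps)
  have holdw: "deriv w holomorphic_on unit_disc" using wh by (intro holomorphic_deriv) auto
  have dp: "(p has_field_derivative xi1 (w z) * deriv w z) (at z)" if z: "z \<in> unit_disc" for z
  proof -
    have "(w has_field_derivative deriv w z) (at z)"
      using wh z by (intro holomorphic_derivI[of _ "ball 0 1"]) auto
    then have "((\<lambda>z. xi (w z)) has_field_derivative xi1 (w z) * deriv w z) (at z)"
      using xi_deriv[OF wne[OF z]] DERIV_chain2 by blast
    then show ?thesis
      by (rule has_field_derivative_transform_within_open[of _ _ _ "ball 0 1"]) (use z pw p_def in auto)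
  qed
  have dpe: "deriv p z = xi1 (w z) * deriv w z" if "z \<in> unit_disc" for z
    using dp[OF that] by (rule DERIV_imp_deriv)
  have "((\<lambda>z. xi1 (w z) * deriv w z) has_field_derivative
          xi2 (w 0) * deriv w 0 * deriv w 0 + xi1 (w 0) * deriv (deriv w) 0) (at 0)"
  proof -
    have a: "(w has_field_derivative deriv w 0) (at 0)"
      using wh by (intro holomorphic_derivI[of _ "ball 0 1"]) auto
    have b: "(deriv w has_field_derivative deriv (deriv w) 0) (at 0)"
      using holdw by (intro holomorphic_derivI[of _ "ball 0 1"]) auto
    have c: "((\<lambda>z. xi1 (w z)) has_field_derivative xi2 (w 0) * deriv w 0) (at 0)"
      using DERIV_chain2[OF xi1_deriv[of "w 0"] a] w0 by simp
    show ?thesis using DERIV_mult[OF c b] by (simp add: algebra_simps)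
  qed
  then have "(deriv p has_field_derivative
          xi2 (w 0) * deriv w 0 * deriv w 0 + xi1 (w 0) * deriv (deriv w) 0) (at 0)"
    by (rule has_field_derivative_transform_within_open[of _ _ _ "ball 0 1"]) (use dpe in auto)
  then have ddp: "deriv (deriv p) 0 = 2 * (deriv w 0)^2 + deriv (deriv w) 0"
    using DERIV_imp_deriv w0 xi1_0 xi2_0 by (fastforce simp: power2_eq_square)
  have dp0: "deriv p 0 = deriv w 0" using dpe[of 0] w0 xi1_0 by simp
  have c2: "coeff0 f 2 = deriv (deriv f) 0 / 2" and c3: "coeff0 f 3 = (deriv ^^ 3) f 0 / 6"
    by (simp_all add: coeff0_def eval_nat_numeral)
  have w2: "(deriv ^^ 2) w 0 = deriv (deriv w) 0" by (simp add: eval_nat_numeral)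
  have F2: "deriv (deriv f) 0 = 2 * deriv w 0" using e2 dp0 by simp
  have F3: "(deriv ^^ 3) f 0 = 3 * (deriv w 0)^2 + 3 * deriv (deriv p) 0 / 2"
    using e3 F2 dp0 by (simp add: field_simps power2_eq_square)
  show ?thesis unfolding c2 c3 w2 F3 F2 ddp by (simp add: field_simps power2_eq_square)
qed


lemma schwarz2:
  assumes wh: "w holomorphic_on unit_disc" and wim: "w ` unit_disc \<subseteq> unit_disc"
  shows "norm ((deriv ^^ 2) w 0) \<le> 2"
proof -
  have bnd: "norm ((deriv ^^ 2) w 0) \<le> 2 / r^2" if r: "0 < r" "r < 1" for r :: real
  proof -
    have "norm ((deriv ^^ 2) w 0) \<le> fact 2 * 1 / r^2"
    proof (rule Cauchy_inequality)
      show "w holomorphic_on ball 0 r" by (rule holomorphic_on_subset[OF wh]) (use r in auto)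
      show "continuous_on (cball 0 r) w"
        by (rule continuous_on_subset[OF holomorphic_on_imp_continuous_on[OF wh]]) (use r in auto)
      show "norm (w x) \<le> 1" if "norm (0 - x) = r" for x
        using wim that r by (force simp: less_imp_le)
    qed (use r in auto)
    then show ?thesis by simp
  qed
  have lim: "((\<lambda>r::real. 2 / r^2) \<longlongrightarrow> 2 / 1^2) (at_left 1)"
    by (intro tendsto_intros) auto
  have ev: "\<forall>\<^sub>F r in at_left (1::real). norm ((deriv ^^ 2) w 0) \<le> 2 / r^2"
  proof -
    have "\<forall>\<^sub>F r in at_left (1::real). r \<in> {0<..<1}"
      by (rule eventually_at_left_real) simp
    then show ?thesis by (rule eventually_mono) (use bnd in auto)
  qed
  show ?thesis
    using tendsto_le[OF trivial_limit_at_left_real lim tendsto_const ev] by simp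
qed



definition Sf :: "complex \<Rightarrow> complex" where
  "Sf = (\<lambda>z. if z = 0 then deriv sin 0 else (sin z - sin 0) / (z - 0))"

lemma Sf_holo: "Sf holomorphic_on UNIV"
  unfolding Sf_def by (rule pole_lemma_open) (auto intro: holomorphic_intros)

lemma Sf_eq: "u \<noteq> 0 \<Longrightarrow> u * Sf u = sin u"
  by (simp add: Sf_def)

lemma extremal: "\<exists>F\<in>S_star_xi. \<forall>z\<in>unit_disc. zf_over_f F z = xi (z^2)"
proof -
  define g where "g = (\<lambda>t. t * Sf (t^2) / (1 - t^2))"
  have nz: "1 - t^2 \<noteq> 0" if "t \<in> unit_disc" for t :: complex
  proof
    assume "1 - t^2 = 0"
    then have "t^2 = 1" by (metis right_minus_eq)
    then have "norm (t^2) = 1" by simp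
    with that show False using power_strict_mono[of "norm t" 1 2] by (simp add: norm_power)
  qed
  have gh: "g holomorphic_on unit_disc"
    unfolding g_def using nz
    by (intro holomorphic_intros holomorphic_on_compose_gen[OF _ Sf_holo, unfolded o_def]) auto
  obtain h where h: "\<And>x. x \<in> unit_disc \<Longrightarrow> (h has_field_derivative g x) (at x within unit_disc)"
    using holomorphic_convex_primitive'[OF convex_ball open_ball gh] by blast
  have h': "(h has_field_derivative g x) (at x)" if "x \<in> unit_disc" for x
    using h[OF that, unfolded at_within_open[OF that open_ball]] .
  define F where "F = (\<lambda>z. z * exp (h z - h 0))"
  have dF: "(F has_field_derivative exp (h z - h 0) + z * (g z * exp (h z - h 0))) (at z)"
    if "z \<in> unit_disc" for z
    unfolding F_def
    by (rule derivative_eq_intros h'[OF that] refl | simp)+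
  have dFe: "deriv F z = exp (h z - h 0) + z * (g z * exp (h z - h 0))" if "z \<in> unit_disc" for z
    using DERIV_imp_deriv[OF dF[OF that]] .
  have holF: "F holomorphic_on unit_disc"
    using dF holomorphic_on_open open_ball by blast
  have zf: "zf_over_f F z = xi (z^2)" if z: "z \<in> unit_disc" for z
  proof (cases "z = 0")
    case True then show ?thesis by (simp add: zf_over_f_def xi_def)
  next
    case False
    have "zf_over_f F z = 1 + z * g z"
      using False dFe[OF z] by (simp add: zf_over_f_def F_def field_simps)
    also have "\<dots> = 1 + sin (z^2) / (1 - z^2)"
      using Sf_eq[of "z^2"] False by (simp add: g_def power2_eq_square mult.assoc)
    finally show ?thesis by (simp add: xi_def)
  qed
  have holxi2: "(\<lambda>z. xi (z^2)) holomorphic_on unit_disc"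
    unfolding xi_def using nz by (intro holomorphic_intros) auto
  have "F \<in> S_star_xi"
    unfolding S_star_xi_def classA_def subordinate_def
  proof (intro CollectI conjI ballI impI exI)
    show "F holomorphic_on unit_disc" by (fact holF)
    show "F 0 = 0" by (simp add: F_def)
    show "deriv F 0 = 1" using dFe[of 0] by simp
    show "F z \<noteq> 0" if "z \<in> unit_disc" "z \<noteq> 0" for z using that by (simp add: F_def)
    show "zf_over_f F holomorphic_on unit_disc"
      using holxi2 by (rule holomorphic_transform) (use zf in auto)
    show "xi holomorphic_on unit_disc" by (fact xi_holo)
    show "(\<lambda>z. z^2) holomorphic_on unit_disc" by (intro holomorphic_intros)
    show "(\<lambda>z::complex. z^2) ` unit_disc \<subseteq> unit_disc"
      by (auto simp: norm_power power_less_one_iff)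
    show "(0::complex)^2 = 0" by simp
    show "zf_over_f F z = xi (z^2)" if "z \<in> unit_disc" for z using zf[OF that] .
  qed
  then show ?thesis using zf by blast
qed


lemma d2sq: "(deriv ^^ 2) (\<lambda>z::complex. z^2) 0 = 2"
proof -
  have "deriv (\<lambda>z::complex. z^2) = (\<lambda>z. 2 * z)"
  proof
    fix z :: complex
    show "deriv (\<lambda>z. z^2) z = 2 * z"
      by (rule DERIV_imp_deriv) (rule derivative_eq_intros refl | simp)+
  qed
  moreover have "deriv (\<lambda>z::complex. 2 * z) 0 = 2"
    by (rule DERIV_imp_deriv) (rule derivative_eq_intros refl | simp)+
  ultimately show ?thesis by (simp add: eval_nat_numeral)
qed

theorem corollary3p4:
  shows "(\<forall>f\<in>S_star_xi. norm (coeff0 f 3 - (coeff0 f 2)\<^sup>2) \<le> 1/2) \<and>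
         (\<exists>f\<in>S_star_xi. norm (coeff0 f 3 - (coeff0 f 2)\<^sup>2) = 1/2)"
proof (intro conjI ballI)
  fix f assume fS: "f \<in> S_star_xi"
  then obtain w where w: "w holomorphic_on unit_disc" "w ` unit_disc \<subseteq> unit_disc" "w 0 = 0"
      "\<forall>z\<in>unit_disc. zf_over_f f z = xi (w z)"
    by (auto simp: S_star_xi_def subordinate_def)
  have "norm (coeff0 f 3 - (coeff0 f 2)\<^sup>2) = norm ((deriv ^^ 2) w 0) / 4"
    unfolding key[OF fS w] by (simp add: norm_divide)
  with schwarz2[OF w(1,2)] show "norm (coeff0 f 3 - (coeff0 f 2)\<^sup>2) \<le> 1/2"
    by simp
next
  obtain F where F: "F \<in> S_star_xi" "\<forall>z\<in>unit_disc. zf_over_f F z = xi (z^2)"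
    using extremal by blast
  have "coeff0 F 3 - (coeff0 F 2)\<^sup>2 = (deriv ^^ 2) (\<lambda>z. z^2) 0 / 4"
    by (rule key[OF F(1)]) (use F(2) in \<open>auto intro: holomorphic_intros simp: norm_power power_less_one_iff\<close>)
  then have "coeff0 F 3 - (coeff0 F 2)\<^sup>2 = 1/2" by (simp add: d2sq)
  then have "norm (coeff0 F 3 - (coeff0 F 2)\<^sup>2) = 1/2" unfolding \<open>coeff0 F 3 - (coeff0 F 2)\<^sup>2 = 1/2\<close> by simp
  with F(1) show "\<exists>f\<in>S_star_xi. norm (coeff0 f 3 - (coeff0 f 2)\<^sup>2) = 1/2" by blast
qed

end
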